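(* Let $I\subseteq\mathbb{R}$ be an interval, $p\in I$, and let $f: I\to\mathbb{R}$ be a continuous star-convex function with center $p$. Then: (i) if $f|_{]-\infty,p]\cap I}$ and $f|_{[p,\infty[\cap I}$ are both convex, then $epi(f)$ is a star-convex set; (ii) if $f|_{]-\infty,p]\cap I}$ and $f|_{[p,\infty[\cap I}$ are both concave, then $hypo(f)$ is a star-convex set; (iii) if $f|_{]-\infty,p]\cap I}$ is convex and $f|_{[p,\infty[\cap I}$ is concave, then $\{(x,t): x\in\,]-\infty,p]\cap I,\ f(x)\leq t\}\cup\{(x,t): x\in[p,\infty[\cap I,\ f(x)\geq t\}$ is a star-convex set; (iv) if $f|_{]-\infty,p]\cap I}$ is concave and $f|_{[p,\infty[\cap I}$ is convex, then $\{(x,t): x\in\,]-\infty,p]\cap I,\ f(x)\geq t\}\cup\{(x,t): x\in[p,\infty[\cap I,\ f(x)\leq t\}$ is a star-convex set.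
   Context: $epi(f)=\{(x,t)\in I\times\mathbb{R}: f(x)\leq t\}$ and $hypo(f)=\{(x,t)\in I\times\mathbb{R}: f(x)\geq t\}$. A function $f: I\to\mathbb{R}$ is star-convex with center $p\in I$ if for every $x\in I$, either $f(tx+(1-t)p)\leq tf(x)+(1-t)f(p)$ for all $t\in[0,1]$, or $f(tx+(1-t)p)\geq tf(x)+(1-t)f(p)$ for all $t\in[0,1]$. A set $X\subseteq\mathbb{R}^2$ is star-convex if there exists $x_0\in X$ such that for all $x\in X$ and $t\in[0,1]$, $tx+(1-t)x_0\in X$. *)

theory Defs
  imports "HOL-Analysis.Analysis"
begin

definition epi :: "real set \<Rightarrow> (real \<Rightarrow> real) \<Rightarrow> (real \<times> real) set" where
  "epi I f = {(x,t). x \<in> I \<and> f x \<le> t}"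

definition hypo :: "real set \<Rightarrow> (real \<Rightarrow> real) \<Rightarrow> (real \<times> real) set" where
  "hypo I f = {(x,t). x \<in> I \<and> f x \<ge> t}"

definition star_convex_fun :: "real set \<Rightarrow> (real \<Rightarrow> real) \<Rightarrow> real \<Rightarrow> bool" where
  "star_convex_fun I f p \<longleftrightarrow> p \<in> I \<and> (\<forall>x\<in>I.
     (\<forall>t\<in>{0..1}. f (t * x + (1 - t) * p) \<le> t * f x + (1 - t) * f p) \<or>
     (\<forall>t\<in>{0..1}. f (t * x + (1 - t) * p) \<ge> t * f x + (1 - t) * f p))"

definition star_convex_set :: "(real \<times> real) set \<Rightarrow> bool" where
  "star_convex_set X \<longleftrightarrow> (\<exists>x0\<in>X. \<forall>x\<in>X. \<forall>t\<in>{0..1::real}.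
     t *\<^sub>R x + (1 - t) *\<^sub>R x0 \<in> X)"

end

theory Submission
  imports Defs
begin

lemma cvx_pt:
  assumes "convex_on S f" "x \<in> S" "p \<in> S" "0 \<le> (t::real)" "t \<le> 1"
  shows "f (t * x + (1 - t) * p) \<le> t * f x + (1 - t) * f p"
  using convex_onD[OF assms(1) assms(4) assms(5) assms(3) assms(2)]
  by (simp add: algebra_simps)

lemma ccv_pt:
  assumes "concave_on S f" "x \<in> S" "p \<in> S" "0 \<le> (t::real)" "t \<le> 1"
  shows "f (t * x + (1 - t) * p) \<ge> t * f x + (1 - t) * f p"
  using concave_onD[OF assms(1) assms(4) assms(5) assms(3) assms(2)]
  by (simp add: algebra_simps)

lemma le_side:
  assumes "x \<le> p" "0 \<le> (t::real)" "t \<le> 1"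
  shows "t * x + (1 - t) * p \<le> p"
proof -
  have "t * (x - p) \<le> 0" using assms by (simp add: mult_nonneg_nonpos)
  then show ?thesis by (simp add: algebra_simps)
qed

lemma ge_side:
  assumes "x \<ge> p" "0 \<le> (t::real)" "t \<le> 1"
  shows "t * x + (1 - t) * p \<ge> p"
proof -
  have "t * (x - p) \<ge> 0" using assms by simp
  then show ?thesis by (simp add: algebra_simps)
qed

lemma le_side2:
  assumes "x \<le> p" "0 \<le> (t::real)" "t \<le> 1"
  shows "t * x + (1 - t) * p \<ge> x"
proof -
  have "(1 - t) * (p - x) \<ge> 0" using assms by simp
  then show ?thesis by (simp add: algebra_simps)
qed

lemma ge_side2:
  assumes "x \<ge> p" "0 \<le> (t::real)" "t \<le> 1"
  shows "t * x + (1 - t) * p \<le> x"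
proof -
  have "(1 - t) * (x - p) \<ge> 0" using assms by simp
  then show ?thesis by (simp add: algebra_simps)
qed

lemma mem_I:
  assumes "is_interval I" "x \<in> I" "p \<in> I" "0 \<le> (t::real)" "t \<le> 1"
  shows "t * x + (1 - t) * p \<in> I"
proof -
  have iv: "\<And>a b y. a \<in> I \<Longrightarrow> b \<in> I \<Longrightarrow> a \<le> y \<Longrightarrow> y \<le> b \<Longrightarrow> y \<in> I"
    using assms(1) unfolding is_interval_1 by blast
  show ?thesis
  proof (cases "x \<le> p")
    case True
    show ?thesis by (rule iv[OF assms(2) assms(3) le_side2[OF True assms(4,5)] le_side[OF True assms(4,5)]])
  next
    case False
    then have F: "p \<le> x" by simp
    show ?thesis by (rule iv[OF assms(3) assms(2) ge_side[OF F assms(4,5)] ge_side2[OF F assms(4,5)]])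
  qed
qed

theorem theorem4p2:
  fixes I :: "real set" and p :: real and f :: "real \<Rightarrow> real"
  assumes "is_interval I" and "p \<in> I"
    and "continuous_on I f"
    and "star_convex_fun I f p"
  shows
    "(convex_on ({..p} \<inter> I) f \<and> convex_on ({p..} \<inter> I) f
        \<longrightarrow> star_convex_set (epi I f))
     \<and> (concave_on ({..p} \<inter> I) f \<and> concave_on ({p..} \<inter> I) f
        \<longrightarrow> star_convex_set (hypo I f))
     \<and> (convex_on ({..p} \<inter> I) f \<and> concave_on ({p..} \<inter> I) f
        \<longrightarrow> star_convex_set ({(x,t). x \<in> {..p} \<inter> I \<and> f x \<le> t}
                               \<union> {(x,t). x \<in> {p..} \<inter> I \<and> f x \<ge> t}))
     \<and> (concave_on ({..p} \<inter> I) f \<and> convex_on ({p..} \<inter> I) f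
        \<longrightarrow> star_convex_set ({(x,t). x \<in> {..p} \<inter> I \<and> f x \<ge> t}
                               \<union> {(x,t). x \<in> {p..} \<inter> I \<and> f x \<le> t}))"
proof -
  note I = assms(1,2)
  have pL: "p \<in> {..p} \<inter> I" and pR: "p \<in> {p..} \<inter> I" using I by auto
  have memL: "t * x + (1 - t) * p \<in> {..p} \<inter> I" if "x \<in> {..p} \<inter> I" "0 \<le> t" "t \<le> 1" for x t
    using that mem_I[OF I(1) _ I(2)] le_side by auto
  have memR: "t * x + (1 - t) * p \<in> {p..} \<inter> I" if "x \<in> {p..} \<inter> I" "0 \<le> t" "t \<le> 1" for x t
    using that mem_I[OF I(1) _ I(2)] ge_side by auto
  have sideLR: "x \<in> {..p} \<inter> I \<or> x \<in> {p..} \<inter> I" if "x \<in> I" for x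
    using that by auto
  have lemU: "t * s + (1 - t) * f p \<ge> t * f x + (1 - t) * f p" if "f x \<le> s" "0 \<le> t" for t s x
    using that by (simp add: mult_left_mono)
  have lemD: "t * s + (1 - t) * f p \<le> t * f x + (1 - t) * f p" if "f x \<ge> s" "0 \<le> t" for t s x
    using that by (simp add: mult_left_mono)
  have P1: "star_convex_set (epi I f)" if c1: "convex_on ({..p} \<inter> I) f" and c2: "convex_on ({p..} \<inter> I) f"
    unfolding star_convex_set_def
  proof (intro bexI[of _ "(p, f p)"] ballI)
    show "(p, f p) \<in> epi I f" using I by (simp add: epi_def)
    fix z and t :: real assume z: "z \<in> epi I f" and t: "t \<in> {0..1}"
    obtain x s where zz: "z = (x, s)" "x \<in> I" "f x \<le> s" using z by (auto simp: epi_def)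
    have "f (t * x + (1 - t) * p) \<le> t * f x + (1 - t) * f p \<and> t * x + (1 - t) * p \<in> I"
      proof (cases "x \<le> p")
      case True
      then have "x \<in> {..p} \<inter> I" using zz by simp
      then show ?thesis using t cvx_pt[OF c1 _ pL, of x t] memL[of x t] by simp
    next
      case False
      then have "x \<in> {p..} \<inter> I" using zz by simp
      then show ?thesis using t cvx_pt[OF c2 _ pR, of x t] memR[of x t] by simp
    qed
    then show "t *\<^sub>R z + (1 - t) *\<^sub>R (p, f p) \<in> epi I f"
      using zz lemU[OF zz(3), of t] t by (auto simp: epi_def)
  qed
  have P2: "star_convex_set (hypo I f)" if c1: "concave_on ({..p} \<inter> I) f" and c2: "concave_on ({p..} \<inter> I) f"
    unfolding star_convex_set_def
  proof (intro bexI[of _ "(p, f p)"] ballI)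
    show "(p, f p) \<in> hypo I f" using I by (simp add: hypo_def)
    fix z and t :: real assume z: "z \<in> hypo I f" and t: "t \<in> {0..1}"
    obtain x s where zz: "z = (x, s)" "x \<in> I" "f x \<ge> s" using z by (auto simp: hypo_def)
    have "f (t * x + (1 - t) * p) \<ge> t * f x + (1 - t) * f p \<and> t * x + (1 - t) * p \<in> I"
      proof (cases "x \<le> p")
      case True
      then have "x \<in> {..p} \<inter> I" using zz by simp
      then show ?thesis using t ccv_pt[OF c1 _ pL, of x t] memL[of x t] by simp
    next
      case False
      then have "x \<in> {p..} \<inter> I" using zz by simp
      then show ?thesis using t ccv_pt[OF c2 _ pR, of x t] memR[of x t] by simp
    qed
    then show "t *\<^sub>R z + (1 - t) *\<^sub>R (p, f p) \<in> hypo I f"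
      using zz lemD[OF zz(3), of t] t by (auto simp: hypo_def)
  qed
  have P3: "star_convex_set ({(x,t). x \<in> {..p} \<inter> I \<and> f x \<le> t}
                               \<union> {(x,t). x \<in> {p..} \<inter> I \<and> f x \<ge> t})"
    if c1: "convex_on ({..p} \<inter> I) f" and c2: "concave_on ({p..} \<inter> I) f"
    unfolding star_convex_set_def
  proof (intro bexI[of _ "(p, f p)"] ballI)
    show "(p, f p) \<in> {(x,t). x \<in> {..p} \<inter> I \<and> f x \<le> t}
                               \<union> {(x,t). x \<in> {p..} \<inter> I \<and> f x \<ge> t}" using I by simp
    fix z and t :: real assume z: "z \<in> {(x,t). x \<in> {..p} \<inter> I \<and> f x \<le> t}
                               \<union> {(x,t). x \<in> {p..} \<inter> I \<and> f x \<ge> t}" and t: "t \<in> {0..1}"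
    obtain x s where zz: "z = (x, s)" using prod.exhaust by blast
    show "t *\<^sub>R z + (1 - t) *\<^sub>R (p, f p) \<in> {(x,t). x \<in> {..p} \<inter> I \<and> f x \<le> t}
                               \<union> {(x,t). x \<in> {p..} \<inter> I \<and> f x \<ge> t}"
    proof (cases "x \<in> {..p} \<inter> I \<and> f x \<le> s")
      case True
      then show ?thesis using zz t cvx_pt[OF c1 _ pL, of x t] memL[of x t] lemU[of x s t] by auto
    next
      case False
      then have F: "x \<in> {p..} \<inter> I" "f x \<ge> s" using z zz by auto
      then show ?thesis using zz t ccv_pt[OF c2 _ pR, of x t] memR[of x t] lemD[of s x t] by auto
    qed
  qed
  have P4: "star_convex_set ({(x,t). x \<in> {..p} \<inter> I \<and> f x \<ge> t}
                               \<union> {(x,t). x \<in> {p..} \<inter> I \<and> f x \<le> t})"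
    if c1: "concave_on ({..p} \<inter> I) f" and c2: "convex_on ({p..} \<inter> I) f"
    unfolding star_convex_set_def
  proof (intro bexI[of _ "(p, f p)"] ballI)
    show "(p, f p) \<in> {(x,t). x \<in> {..p} \<inter> I \<and> f x \<ge> t}
                               \<union> {(x,t). x \<in> {p..} \<inter> I \<and> f x \<le> t}" using I by simp
    fix z and t :: real assume z: "z \<in> {(x,t). x \<in> {..p} \<inter> I \<and> f x \<ge> t}
                               \<union> {(x,t). x \<in> {p..} \<inter> I \<and> f x \<le> t}" and t: "t \<in> {0..1}"
    obtain x s where zz: "z = (x, s)" using prod.exhaust by blast
    show "t *\<^sub>R z + (1 - t) *\<^sub>R (p, f p) \<in> {(x,t). x \<in> {..p} \<inter> I \<and> f x \<ge> t}
                               \<union> {(x,t). x \<in> {p..} \<inter> I \<and> f x \<le> t}"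
    proof (cases "x \<in> {..p} \<inter> I \<and> f x \<ge> s")
      case True
      then show ?thesis using zz t ccv_pt[OF c1 _ pL, of x t] memL[of x t] lemD[of s x t] by auto
    next
      case False
      then have F: "x \<in> {p..} \<inter> I" "f x \<le> s" using z zz by auto
      then show ?thesis using zz t cvx_pt[OF c2 _ pR, of x t] memR[of x t] lemU[of x s t] by auto
    qed
  qed
  show ?thesis using P1 P2 P3 P4 by blast
qed

end
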